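(* Let $\mathcal{L}$ be a triangulation with branching structure of a closed 3-manifold $\mathcal{M}^3$, carrying three copies of the $\mathbb{Z}_2$ toric code as described in the context. Let $\alpha_2$ be a 2-cycle of $\mathcal{L}$ (a set of triangles forming a $\mathbb{Z}_2$-cycle) and let $i\neq j\in\{1,2,3\}$. Define $$U'_{i,j}(\alpha_2)=\prod_{[v_0v_1v_2]\in\alpha_2}\mathrm{CZ}\big(q^{(i)}_{[v_0v_1]},q^{(j)}_{[v_1v_2]}\big)=(-1)^{\int_{\alpha_2}a^{(i)}\cup a^{(j)}}.$$ Then $U'_{i,j}(\alpha_2)$ preserves the code space, and on it $$U'_{i,j}(\alpha_2)=\prod_{\beta^1,\gamma^1\in B^1}\overline{\mathrm{CZ}}\big[(\beta^1;i),(\gamma^1;j)\big]^{\int_{\mathcal{M}^3}\alpha^1\cup\beta^1\cup\gamma^1},$$ where $\alpha^1\in H^1(\mathcal{M}^3;\mathbb{Z}_2)$ is the Poincaré dual of $[\alpha_2]$.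
   Context: Toric code copy $k$: one qubit $q^{(k)}_e$ per edge; $X$-stabilizers $\prod_{e\ni v}X^{(k)}_e$ on vertices; $Z$-stabilizers $\prod_{e\subset f}Z^{(k)}_e$ on triangles. The $\{0,1\}$-valued operator cochain $a^{(k)}$ satisfies $(-1)^{a^{(k)}(e)}=Z^{(k)}_e$; cup products on ordered simplices are $(\alpha\cup\beta)([v_0v_1v_2])=\alpha([v_0v_1])\beta([v_1v_2])$, with $v_0\prec v_1\prec v_2$ from the branching structure. On the code space $da^{(k)}=0$. Fix a basis $B^1$ of $H^1(\mathcal{M}^3;\mathbb{Z}_2)$; writing $[a^{(k)}]=\sum_{\beta}m^{(k)}_\beta\beta^1$, the logical qubit $(\beta^1;k)$ has computational basis value $m^{(k)}_\beta\in\{0,1\}$, and $\overline{\mathrm{CZ}}[(\beta^1;i),(\gamma^1;j)]$ acts as $(-1)^{m^{(i)}_\beta m^{(j)}_\gamma}$. *)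

theory Defs
  imports Complex_Main
begin

text \<open>A 3-dimensional simplicial complex is given by its set K of tetrahedra
(4-element vertex sets); its faces are all nonempty subsets of tetrahedra.\<close>

definition verts :: "'v set set \<Rightarrow> 'v set" where
  "verts K = \<Union>K"

definition edges :: "'v set set \<Rightarrow> 'v set set" where
  "edges K = {e. card e = 2 \<and> (\<exists>t\<in>K. e \<subseteq> t)}"

definition tris :: "'v set set \<Rightarrow> 'v set set" where
  "tris K = {f. card f = 3 \<and> (\<exists>t\<in>K. f \<subseteq> t)}"

definition graph_connected :: "'v set set \<Rightarrow> bool" where
  "graph_connected G \<longleftrightarrow>
     (\<forall>u\<in>\<Union>G. \<forall>w\<in>\<Union>G. (\<lambda>x y. {x, y} \<in> G)\<^sup>*\<^sup>* u w)"

definition edges2 :: "'v set set \<Rightarrow> 'v set set" where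
  "edges2 L = {e. card e = 2 \<and> (\<exists>f\<in>L. e \<subseteq> f)}"

definition link2 :: "'v set set \<Rightarrow> 'v \<Rightarrow> 'v set set" where
  "link2 L w = {f - {w} | f. f \<in> L \<and> w \<in> f}"

definition closed_surface :: "'v set set \<Rightarrow> bool" where
  "closed_surface L \<longleftrightarrow> finite L \<and> (\<forall>f\<in>L. card f = 3) \<and>
     (\<forall>e\<in>edges2 L. card {f\<in>L. e \<subseteq> f} = 2) \<and>
     (\<forall>w\<in>\<Union>L. graph_connected (link2 L w))"

definition sphere2 :: "'v set set \<Rightarrow> bool" where
  "sphere2 L \<longleftrightarrow> closed_surface L \<and> graph_connected (edges2 L) \<and>
     int (card (\<Union>L)) - int (card (edges2 L)) + int (card L) = 2"

definition vlink :: "'v set set \<Rightarrow> 'v \<Rightarrow> 'v set set" where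
  "vlink K v = {t - {v} | t. t \<in> K \<and> v \<in> t}"

text \<open>Triangulation of a closed 3-manifold: finite, and the link of every vertex
is a triangulated 2-sphere (combinatorial 3-manifold; in dimension 3 every
triangulation of a topological manifold is of this kind).\<close>
definition closed_3manifold :: "'v set set \<Rightarrow> bool" where
  "closed_3manifold K \<longleftrightarrow> finite K \<and> (\<forall>t\<in>K. card t = 4) \<and>
     (\<forall>v\<in>verts K. sphere2 (vlink K v))"

text \<open>A branching structure: every edge is oriented (br u w means u \<prec> w), and
no triangle is an oriented cycle (the orientation is transitive on every triangle).\<close>
definition branching :: "'v set set \<Rightarrow> ('v \<Rightarrow> 'v \<Rightarrow> bool) \<Rightarrow> bool" where
  "branching K br \<longleftrightarrow> (\<forall>x. \<not> br x x) \<and>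
     (\<forall>e\<in>edges K. \<forall>u\<in>e. \<forall>w\<in>e. u \<noteq> w \<longrightarrow> (br u w \<longleftrightarrow> \<not> br w u)) \<and>
     (\<forall>f\<in>tris K. \<forall>x\<in>f. \<forall>y\<in>f. \<forall>z\<in>f. br x y \<longrightarrow> br y z \<longrightarrow> br x z)"

definition olist :: "('v \<Rightarrow> 'v \<Rightarrow> bool) \<Rightarrow> 'v set \<Rightarrow> 'v list" where
  "olist br s = (THE xs. set xs = s \<and> sorted_wrt br xs)"

section \<open>Z2 cochains (nat-valued, read modulo 2)\<close>

definition cocycle1 :: "'v set set \<Rightarrow> ('v set \<Rightarrow> nat) \<Rightarrow> bool" where
  "cocycle1 K a \<longleftrightarrow> (\<forall>f\<in>tris K. even (\<Sum>e\<in>{e. e \<subseteq> f \<and> card e = 2}. a e))"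

text \<open>a and b differ by a coboundary d\<lambda> (mod 2) on all edges.\<close>
definition cohomologous1 :: "'v set set \<Rightarrow> ('v set \<Rightarrow> nat) \<Rightarrow> ('v set \<Rightarrow> nat) \<Rightarrow> bool" where
  "cohomologous1 K a b \<longleftrightarrow>
     (\<exists>lam::'v \<Rightarrow> nat. \<forall>e\<in>edges K. even (a e + b e + (\<Sum>v\<in>e. lam v)))"

text \<open>(beta b) for b in B are 1-cocycles whose classes form a basis of H^1(M;Z2):
every 1-cocycle is cohomologous to a unique Z2-combination of them.\<close>
definition cohom_basis :: "'v set set \<Rightarrow> 'b set \<Rightarrow> ('b \<Rightarrow> 'v set \<Rightarrow> nat) \<Rightarrow> bool" where
  "cohom_basis K B beta \<longleftrightarrow> finite B \<and> (\<forall>b\<in>B. cocycle1 K (beta b)) \<and>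
     (\<forall>a. cocycle1 K a \<longrightarrow>
        (\<exists>!m. (\<forall>b\<in>B. m b \<in> {0, 1}) \<and> (\<forall>b. b \<notin> B \<longrightarrow> m b = 0) \<and>
              cohomologous1 K a (\<lambda>e. \<Sum>b\<in>B. m b * beta b e)))"

definition coeff :: "'v set set \<Rightarrow> 'b set \<Rightarrow> ('b \<Rightarrow> 'v set \<Rightarrow> nat) \<Rightarrow> ('v set \<Rightarrow> nat) \<Rightarrow> 'b \<Rightarrow> nat" where
  "coeff K B beta a = (THE m. (\<forall>b\<in>B. m b \<in> {0, 1}) \<and> (\<forall>b. b \<notin> B \<longrightarrow> m b = 0) \<and>
              cohomologous1 K a (\<lambda>e. \<Sum>b\<in>B. m b * beta b e))"

definition cup3 :: "('v \<Rightarrow> 'v \<Rightarrow> bool) \<Rightarrow> ('v set \<Rightarrow> nat) \<Rightarrow> ('v set \<Rightarrow> nat) \<Rightarrow> ('v set \<Rightarrow> nat)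
     \<Rightarrow> 'v set \<Rightarrow> nat" where
  "cup3 br a b c t = (let xs = olist br t in
      a {xs!0, xs!1} * b {xs!1, xs!2} * c {xs!2, xs!3})"

definition cycle2 :: "'v set set \<Rightarrow> 'v set set \<Rightarrow> bool" where
  "cycle2 K A \<longleftrightarrow> A \<subseteq> tris K \<and> (\<forall>e\<in>edges K. even (card {f\<in>A. e \<subseteq> f}))"

text \<open>Cap product of the Z2 fundamental class [M] (sum of all tetrahedra) with a
1-cochain: ([v0v1v2v3] cap a) = a([v0v1]) [v1v2v3]; value on triangle f.\<close>
definition capM :: "'v set set \<Rightarrow> ('v \<Rightarrow> 'v \<Rightarrow> bool) \<Rightarrow> ('v set \<Rightarrow> nat) \<Rightarrow> 'v set \<Rightarrow> nat" where
  "capM K br a f = (\<Sum>t\<in>{t\<in>K. (let xs = olist br t in f = {xs!1, xs!2, xs!3})}.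
       (let xs = olist br t in a {xs!0, xs!1}))"

text \<open>alpha1 is a 1-cocycle representing the Poincare dual of [A]:
[M] cap [alpha1] = [A] in H_2(M;Z2), i.e. they differ by the boundary of a 3-chain C.\<close>
definition poincare_dual :: "'v set set \<Rightarrow> ('v \<Rightarrow> 'v \<Rightarrow> bool) \<Rightarrow> 'v set set \<Rightarrow> ('v set \<Rightarrow> nat) \<Rightarrow> bool" where
  "poincare_dual K br A alpha1 \<longleftrightarrow> cocycle1 K alpha1 \<and>
     (\<exists>C\<subseteq>K. \<forall>f\<in>tris K.
        even (capM K br alpha1 f + (if f \<in> A then 1 else 0) + card {t\<in>C. f \<subseteq> t}))"

text \<open>Computational basis states: z k e is the Z-basis bit of qubit q^(k)_e.
States are complex amplitude functions on basis configurations.\<close>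
type_synonym 'v config = "nat \<Rightarrow> 'v set \<Rightarrow> bool"
type_synonym 'v state = "'v config \<Rightarrow> complex"

definition valid_config :: "'v set set \<Rightarrow> 'v config \<Rightarrow> bool" where
  "valid_config K z \<longleftrightarrow> (\<forall>k e. z k e \<longrightarrow> k \<in> {1, 2, 3} \<and> e \<in> edges K)"

definition hilbert :: "'v set set \<Rightarrow> 'v state set" where
  "hilbert K = {\<psi>. \<forall>z. \<not> valid_config K z \<longrightarrow> \<psi> z = 0}"

text \<open>Vertex stabilizer prod_{e \<ni> v} X^(k)_e (flips the bits).\<close>
definition Xstab :: "'v set set \<Rightarrow> nat \<Rightarrow> 'v \<Rightarrow> 'v state \<Rightarrow> 'v state" where
  "Xstab K k v \<psi> = (\<lambda>z. \<psi> (\<lambda>k' e. if k' = k \<and> e \<in> edges K \<and> v \<in> e then \<not> z k' e else z k' e))"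

text \<open>Triangle stabilizer prod_{e \<subset> f} Z^(k)_e.\<close>
definition Zstab :: "'v set set \<Rightarrow> nat \<Rightarrow> 'v set \<Rightarrow> 'v state \<Rightarrow> 'v state" where
  "Zstab K k f \<psi> = (\<lambda>z. (-1) ^ card {e. e \<subseteq> f \<and> card e = 2 \<and> z k e} * \<psi> z)"

definition code_space :: "'v set set \<Rightarrow> 'v state set" where
  "code_space K = {\<psi>. \<psi> \<in> hilbert K \<and>
     (\<forall>k\<in>{1, 2, 3}. (\<forall>v\<in>verts K. Xstab K k v \<psi> = \<psi>) \<and>
                     (\<forall>f\<in>tris K. Zstab K k f \<psi> = \<psi>))}"

definition acochain :: "nat \<Rightarrow> 'v config \<Rightarrow> 'v set \<Rightarrow> nat" where
  "acochain k z = (\<lambda>e. if z k e then 1 else 0)"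

definition Uprime :: "('v \<Rightarrow> 'v \<Rightarrow> bool) \<Rightarrow> 'v set set \<Rightarrow> nat \<Rightarrow> nat \<Rightarrow> 'v state \<Rightarrow> 'v state" where
  "Uprime br A i j \<psi> = (\<lambda>z. (\<Prod>f\<in>A. (let xs = olist br f in
        if z i {xs!0, xs!1} \<and> z j {xs!1, xs!2} then -1 else 1)) * \<psi> z)"

definition diag_op :: "('v config \<Rightarrow> complex) \<Rightarrow> 'v state \<Rightarrow> 'v state" where
  "diag_op ph \<psi> = (\<lambda>z. ph z * \<psi> z)"

text \<open>Phase of the logical CZ[(b;i),(c;j)] on a basis configuration:
(-1)^(m^(i)_b m^(j)_c).\<close>
definition lcz_phase :: "'v set set \<Rightarrow> 'b set \<Rightarrow> ('b \<Rightarrow> 'v set \<Rightarrow> nat) \<Rightarrow> 'b \<Rightarrow> nat \<Rightarrow> 'b \<Rightarrow> nat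
     \<Rightarrow> 'v config \<Rightarrow> complex" where
  "lcz_phase K B beta b i c j z =
     (-1) ^ (coeff K B beta (acochain i z) b * coeff K B beta (acochain j z) c)"

definition logical_CZ :: "'v set set \<Rightarrow> 'b set \<Rightarrow> ('b \<Rightarrow> 'v set \<Rightarrow> nat) \<Rightarrow> 'b \<Rightarrow> nat \<Rightarrow> 'b \<Rightarrow> nat
     \<Rightarrow> 'v state \<Rightarrow> 'v state" where
  "logical_CZ K B beta b i c j = diag_op (lcz_phase K B beta b i c j)"

text \<open>The product over b, c in B of logical_CZ[(b;i),(c;j)]^(n b c); all factors
are diagonal, so the product is the diagonal operator with the product phase.\<close>
definition prod_logical_CZ :: "'v set set \<Rightarrow> 'b set \<Rightarrow> ('b \<Rightarrow> 'v set \<Rightarrow> nat) \<Rightarrow> nat \<Rightarrow> nat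
     \<Rightarrow> ('b \<Rightarrow> 'b \<Rightarrow> nat) \<Rightarrow> 'v state \<Rightarrow> 'v state" where
  "prod_logical_CZ K B beta i j n =
     diag_op (\<lambda>z. \<Prod>b\<in>B. \<Prod>c\<in>B. (lcz_phase K B beta b i c j z) ^ n b c)"

end

theory Submission
  imports Defs "HOL-Library.Z2"
begin

definition sto :: "('v \<Rightarrow> 'v \<Rightarrow> bool) \<Rightarrow> 'v set \<Rightarrow> bool" where
 "sto br s \<longleftrightarrow> (\<forall>x\<in>s. \<not> br x x) \<and> (\<forall>x\<in>s. \<forall>y\<in>s. x \<noteq> y \<longrightarrow> (br x y \<longleftrightarrow> \<not> br y x)) \<and>
    (\<forall>x\<in>s. \<forall>y\<in>s. \<forall>z\<in>s. br x y \<longrightarrow> br y z \<longrightarrow> br x z)"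

lemma sto_subset: "sto br s \<Longrightarrow> s' \<subseteq> s \<Longrightarrow> sto br s'"
  unfolding sto_def by blast

lemma sto_min: assumes "finite s" "s \<noteq> {}" "sto br s" shows "\<exists>x\<in>s. \<forall>y\<in>s. y \<noteq> x \<longrightarrow> br x y"
  using assms
proof (induction s rule: finite_ne_induct)
  case (singleton x) then show ?case by auto
next
  case (insert a s)
  from insert.IH[OF sto_subset[OF insert.prems]] obtain m where m: "m\<in>s" "\<forall>y\<in>s. y \<noteq> m \<longrightarrow> br m y" by blast
  have am: "a \<noteq> m" using insert m by auto
  show ?case
  proof (cases "br a m")
    case True
    then show ?thesis using insert.prems m am unfolding sto_def by (metis insert_iff)
  next
    case False
    then have "br m a" using insert.prems m am unfolding sto_def by blast
    then show ?thesis using m by auto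
  qed
qed

lemma sto_sorted_ex: "finite s \<Longrightarrow> sto br s \<Longrightarrow> \<exists>xs. set xs = s \<and> sorted_wrt br xs"
proof (induction "card s" arbitrary: s)
  case 0 then show ?case by auto
next
  case (Suc n)
  then have "s \<noteq> {}" by auto
  then obtain x where x: "x\<in>s" "\<forall>y\<in>s. y\<noteq>x \<longrightarrow> br x y" using sto_min Suc.prems by blast
  obtain xs where xs: "set xs = s - {x}" "sorted_wrt br xs"
  proof -
    have "n = card (s - {x})" using Suc.hyps(2) x(1) Suc.prems by simp
    moreover have "sto br (s - {x})" using sto_subset[of br s "s - {x}"] Suc.prems by blast
    ultimately show ?thesis using Suc.hyps(1)[of "s - {x}"] Suc.prems that by blast
  qed
  show ?case using xs x by (intro exI[of _ "x # xs"]) auto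
qed

lemma sorted_unique: "sto br (set xs) \<Longrightarrow> sorted_wrt br xs \<Longrightarrow> sorted_wrt br ys \<Longrightarrow> set ys = set xs \<Longrightarrow> xs = ys"
proof (induction xs arbitrary: ys)
  case Nil then show ?case by auto
next
  case (Cons x xs)
  then obtain y ys' where ys: "ys = y # ys'" by (cases ys) auto
  have irr: "\<not> br u u" if "u \<in> set (x#xs)" for u using Cons.prems(1) that unfolding sto_def by blast
  have xy: "x = y"
  proof (rule ccontr)
    assume "x \<noteq> y"
    then have "y \<in> set xs" "x \<in> set ys'" using Cons.prems(4) ys by auto
    then have "br x y" "br y x" using Cons.prems(2,3) ys by auto
    moreover have "x \<in> set (x#xs)" "y \<in> set (x#xs)" using \<open>y \<in> set xs\<close> by auto
    moreover have "\<forall>u\<in>set (x#xs). \<forall>w\<in>set (x#xs). u \<noteq> w \<longrightarrow> (br u w \<longleftrightarrow> \<not> br w u)"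
      using Cons.prems(1) unfolding sto_def by blast
    ultimately show False using \<open>x \<noteq> y\<close> by blast
  qed
  have "x \<notin> set xs" using Cons.prems(2) irr by auto
  moreover have "x \<notin> set ys'" using Cons.prems(3) ys xy irr by auto
  ultimately have "set ys' = set xs" using Cons.prems(4) ys xy by auto
  then have "xs = ys'" using Cons.IH[of ys'] Cons.prems sto_subset[of br "set (x#xs)" "set xs"] ys by auto
  then show ?case using ys xy by simp
qed

lemma olist_eq: assumes "sto br s" "set xs = s" "sorted_wrt br xs" shows "olist br s = xs"
  unfolding olist_def
proof (rule the_equality)
  show "set xs = s \<and> sorted_wrt br xs" using assms by simp
  fix ys assume ys: "set ys = s \<and> sorted_wrt br ys"
  have h: "sto br (set xs)" using assms(1,2) by simp
  have e: "set ys = set xs" using ys assms(2) by simp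
  have "xs = ys" using sorted_unique[OF h assms(3) conjunct2[OF ys] e] .
  then show "ys = xs" by simp
qed

lemma tri_mem: "t \<in> K \<Longrightarrow> {x,y,z} \<subseteq> t \<Longrightarrow> distinct [x,y,z] \<Longrightarrow> {x,y,z} \<in> tris K"
  unfolding tris_def by (intro CollectI conjI bexI[of _ t]) auto

lemma edge_mem: "t \<in> K \<Longrightarrow> {x,y} \<subseteq> t \<Longrightarrow> x \<noteq> y \<Longrightarrow> {x,y} \<in> edges K"
  unfolding edges_def by (intro CollectI conjI bexI[of _ t]) auto

lemma br_irr: "branching K br \<Longrightarrow> \<not> br x x"
  unfolding branching_def by (elim conjE) (erule allE)

lemma br_anti: "branching K br \<Longrightarrow> e \<in> edges K \<Longrightarrow> u \<in> e \<Longrightarrow> w \<in> e \<Longrightarrow> u \<noteq> w \<Longrightarrow> (br u w \<longleftrightarrow> \<not> br w u)"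
  unfolding branching_def by (elim conjE) (drule bspec, assumption, drule bspec, assumption, drule bspec, assumption, simp)

lemma br_trans: "branching K br \<Longrightarrow> f \<in> tris K \<Longrightarrow> x \<in> f \<Longrightarrow> y \<in> f \<Longrightarrow> z \<in> f \<Longrightarrow> br x y \<Longrightarrow> br y z \<Longrightarrow> br x z"
  unfolding branching_def by (elim conjE) (drule bspec, assumption, drule bspec, assumption, drule bspec, assumption, drule bspec, assumption, simp)

lemma branching_sto: assumes "branching K br" "t \<in> K" shows "sto br t"
proof -
  have irr: "\<And>x. \<not> br x x" using assms br_irr by metis
  have e: "{x,y} \<in> edges K" if "x \<in> t" "y \<in> t" "x \<noteq> y" for x y
    using edge_mem[OF assms(2)] that by simp
  have f: "{x,y,z} \<in> tris K" if "x \<in> t" "y \<in> t" "z \<in> t" "x \<noteq> y" "x \<noteq> z" "y \<noteq> z" for x y z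
    apply (rule tri_mem[OF assms(2)])
    using that apply blast
    using that apply simp
    done
  have anti: "br x y \<longleftrightarrow> \<not> br y x" if "x \<in> t" "y \<in> t" "x \<noteq> y" for x y
    using br_anti[OF assms(1) e[OF that], of x y] that(3) by blast
  have tr: "br x z" if "x \<in> t" "y \<in> t" "z \<in> t" "br x y" "br y z" for x y z
  proof -
    have "x \<noteq> y" "y \<noteq> z" using irr that by auto
    moreover have "x \<noteq> z" using anti[of x y] that \<open>x \<noteq> y\<close> by blast
    ultimately show ?thesis using br_trans[OF assms(1) f[of x y z], of x y z] that by blast
  qed
  show ?thesis unfolding sto_def
    apply (intro conjI ballI impI)
    subgoal for x using irr by simp
    subgoal for x y using anti by blast
    subgoal for x y z using tr by blast
    done
qed

lemma sorted_distinct_br: "(\<And>x. \<not> br x x) \<Longrightarrow> sorted_wrt br xs \<Longrightarrow> distinct xs"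
  by (induction xs) auto

lemma l4: "length xs = 4 \<Longrightarrow> \<exists>x0 x1 x2 x3. xs = [x0,x1,x2,x3]"
  by (auto simp add: numeral_eq_Suc length_Suc_conv)

lemma l3: "length xs = 3 \<Longrightarrow> \<exists>x0 x1 x2. xs = [x0,x1,x2]"
  by (auto simp add: numeral_eq_Suc length_Suc_conv)

lemma tet_list: assumes "closed_3manifold K" "branching K br" "t \<in> K"
  obtains x0 x1 x2 x3 where "olist br t = [x0,x1,x2,x3]" "t = {x0,x1,x2,x3}" "distinct [x0,x1,x2,x3]"
     "sorted_wrt br [x0,x1,x2,x3]"
proof -
  have c: "card t = 4" "finite t" using assms unfolding closed_3manifold_def by (auto intro: card_ge_0_finite)
  have s: "sto br t" using branching_sto assms by blast
  obtain xs where xs: "set xs = t" "sorted_wrt br xs" using sto_sorted_ex[OF c(2) s] by blast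
  have irr: "\<And>x. \<not> br x x" using assms br_irr by metis
  have d: "distinct xs" using sorted_distinct_br[OF irr xs(2)] .
  have "length xs = 4" using distinct_card[OF d] xs c by simp
  then obtain x0 x1 x2 x3 where "xs = [x0,x1,x2,x3]" using l4 by blast
  then show ?thesis using that olist_eq[OF s xs(1,2)] xs d by auto
qed

lemma tri_list: assumes "branching K br" "f \<in> tris K"
  obtains x0 x1 x2 where "olist br f = [x0,x1,x2]" "f = {x0,x1,x2}" "distinct [x0,x1,x2]"
     "sorted_wrt br [x0,x1,x2]"
proof -
  obtain t where t: "t \<in> K" "f \<subseteq> t" "card f = 3" using assms unfolding tris_def by auto
  have c: "finite f" using t(3) by (auto intro: card_ge_0_finite)
  have s: "sto br f" using branching_sto assms t sto_subset by blast
  obtain xs where xs: "set xs = f" "sorted_wrt br xs" using sto_sorted_ex[OF c s] by blast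
  have irr: "\<And>x. \<not> br x x" using assms br_irr by metis
  have d: "distinct xs" using sorted_distinct_br[OF irr xs(2)] .
  have "length xs = 3" using distinct_card[OF d] xs t by simp
  then obtain x0 x1 x2 where "xs = [x0,x1,x2]" using l3 by blast
  then show ?thesis using that olist_eq[OF s xs(1,2)] xs d by auto
qed

lemma tri_edges: assumes "distinct [x,y,z]"
  shows "{e. e \<subseteq> {x,y,z} \<and> card e = 2} = {{x,y},{x,z},{y,z}}"
proof
  show "{{x,y},{x,z},{y,z}} \<subseteq> {e. e \<subseteq> {x,y,z} \<and> card e = 2}" using assms by auto
  show "{e. e \<subseteq> {x,y,z} \<and> card e = 2} \<subseteq> {{x,y},{x,z},{y,z}}"
  proof
    fix e assume "e \<in> {e. e \<subseteq> {x,y,z} \<and> card e = 2}"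
    then have e: "e \<subseteq> {x,y,z}" "card e = 2" by auto
    then obtain u w where "e = {u,w}" "u \<noteq> w" by (meson card_2_iff)
    then show "e \<in> {{x,y},{x,z},{y,z}}" using e by auto
  qed
qed

lemma tri_edges_sum: assumes "distinct [x,y,z]"
  shows "sum g {e. e \<subseteq> {x,y,z} \<and> card e = 2} = g {x,y} + g {x,z} + g {y,z}"
  using assms by (simp add: tri_edges doubleton_eq_iff insert_commute add.assoc)


lemma tet_faces: assumes d: "distinct [x0,x1,x2,x3]"
  shows "{f. f \<subseteq> {x0,x1,x2,x3} \<and> card f = 3} = {{x1,x2,x3},{x0,x2,x3},{x0,x1,x3},{x0,x1,x2}}"
proof
  show "{{x1,x2,x3},{x0,x2,x3},{x0,x1,x3},{x0,x1,x2}} \<subseteq> {f. f \<subseteq> {x0,x1,x2,x3} \<and> card f = 3}" using d by auto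
  show "{f. f \<subseteq> {x0,x1,x2,x3} \<and> card f = 3} \<subseteq> {{x1,x2,x3},{x0,x2,x3},{x0,x1,x3},{x0,x1,x2}}"
  proof
    fix f assume "f \<in> {f. f \<subseteq> {x0,x1,x2,x3} \<and> card f = 3}"
    then have f: "f \<subseteq> {x0,x1,x2,x3}" "card f = 3" by auto
    have c4: "card {x0,x1,x2,x3} = 4" using d by simp
    have "\<exists>x\<in>{x0,x1,x2,x3}. x \<notin> f"
    proof (rule ccontr)
      assume "\<not> ?thesis"
      then have "{x0,x1,x2,x3} \<subseteq> f" by blast
      then have "card {x0,x1,x2,x3} \<le> card f" using f by (intro card_mono) (auto intro: card_ge_0_finite)
      then show False using c4 f by simp
    qed
    then obtain x where x: "x \<in> {x0,x1,x2,x3}" "x \<notin> f" by blast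
    have sub: "f \<subseteq> {x0,x1,x2,x3} - {x}" using f x by blast
    have "card ({x0,x1,x2,x3} - {x}) = 3" using c4 x by (simp only: card_Diff_singleton_if) simp
    then have fe: "f = {x0,x1,x2,x3} - {x}" using sub f by (intro card_subset_eq) auto
    have "x = x0 \<or> x = x1 \<or> x = x2 \<or> x = x3" using x by blast
    then show "f \<in> {{x1,x2,x3},{x0,x2,x3},{x0,x1,x3},{x0,x1,x2}}"
    proof (elim disjE)
      assume "x = x0" then have "f = {x1,x2,x3}" using fe d by auto then show ?thesis by blast
    next
      assume "x = x1" then have "f = {x0,x2,x3}" using fe d by auto then show ?thesis by blast
    next
      assume "x = x2" then have "f = {x0,x1,x3}" using fe d by auto then show ?thesis by blast
    next
      assume "x = x3" then have "f = {x0,x1,x2}" using fe d by auto then show ?thesis by blast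
    qed
  qed
qed

lemma tet_faces_sum: assumes d: "distinct [x0,x1,x2,x3]"
  shows "sum g {f. f \<subseteq> {x0,x1,x2,x3} \<and> card f = 3} = g {x1,x2,x3} + g {x0,x2,x3} + g {x0,x1,x3} + g {x0,x1,x2}"
proof -
  have ne: "A \<noteq> B" if "x \<in> B" "x \<notin> A" for A B :: "'a set" and x using that by blast
  have n1: "{x1,x2,x3} \<notin> {{x0,x2,x3},{x0,x1,x3},{x0,x1,x2}}"
    using ne[of x0 "{x0,x2,x3}" "{x1,x2,x3}"] ne[of x0 "{x0,x1,x3}" "{x1,x2,x3}"] ne[of x0 "{x0,x1,x2}" "{x1,x2,x3}"] d
    by auto
  have n2: "{x0,x2,x3} \<notin> {{x0,x1,x3},{x0,x1,x2}}"
    using ne[of x1 "{x0,x1,x3}" "{x0,x2,x3}"] ne[of x1 "{x0,x1,x2}" "{x0,x2,x3}"] d by auto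
  have n3: "{x0,x1,x3} \<notin> {{x0,x1,x2}}"
    using ne[of x2 "{x0,x1,x2}" "{x0,x1,x3}"] d by auto
  show ?thesis unfolding tet_faces[OF d]
    by (simp only: sum.insert n1 n2 n3 finite_insert finite.emptyI empty_iff sum.empty add_0_right
        not_False_eq_True add.assoc)
qed

lemma bit_test: "(a::bit) * b + a * (b + c) = a * c"
  by (cases a; cases b; cases c) simp_all

lemma fin_tets: "closed_3manifold K \<Longrightarrow> t \<in> K \<Longrightarrow> finite t"
  unfolding closed_3manifold_def by (auto intro: card_ge_0_finite)

lemma fin_K: "closed_3manifold K \<Longrightarrow> finite K"
  unfolding closed_3manifold_def by auto

lemma fin_tris: assumes "closed_3manifold K" shows "finite (tris K)"
proof -
  have "finite (\<Union>K)" using fin_tets[OF assms] fin_K[OF assms] by blast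
  moreover have "tris K \<subseteq> Pow (\<Union>K)" unfolding tris_def by auto
  ultimately show ?thesis by (meson finite_Pow_iff finite_subset)
qed

lemma fin_edges: assumes "closed_3manifold K" shows "finite (edges K)"
proof -
  have "finite (\<Union>K)" using fin_tets[OF assms] fin_K[OF assms] by blast
  moreover have "edges K \<subseteq> Pow (\<Union>K)" unfolding edges_def by auto
  ultimately show ?thesis by (meson finite_Pow_iff finite_subset)
qed

lemma edges_in_tri: "f \<in> tris K \<Longrightarrow> {e \<in> edges K. e \<subseteq> f} = {e. e \<subseteq> f \<and> card e = 2}"
  unfolding tris_def edges_def by auto

lemma tris_in_tet: "t \<in> K \<Longrightarrow> {f \<in> tris K. f \<subseteq> t} = {f. f \<subseteq> t \<and> card f = 3}"
  unfolding tris_def by auto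

lemma sum_swap_count:
  assumes "finite S" "finite T"
  shows "(\<Sum>s\<in>S. \<Sum>x\<in>{x\<in>T. R x s}. X x) = (\<Sum>x\<in>T. (of_nat (card {s\<in>S. R x s}) :: 'a::comm_semiring_1) * X x)"
proof -
  have "(\<Sum>s\<in>S. \<Sum>x\<in>{x\<in>T. R x s}. X x) = (\<Sum>x\<in>T. \<Sum>s\<in>{s\<in>S. R x s}. X x)"
    using sum.swap_restrict[OF assms, of "\<lambda>s x. X x" "\<lambda>s x. R x s"] by simp
  also have "\<dots> = (\<Sum>x\<in>T. of_nat (card {s\<in>S. R x s}) * X x)" by simp
  finally show ?thesis .
qed

lemma tri_two_tets: assumes M: "closed_3manifold K" and f: "f \<in> tris K"
  shows "card {t \<in> K. f \<subseteq> t} = 2"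
proof -
  obtain t0 where t0: "t0 \<in> K" "f \<subseteq> t0" "card f = 3" using f unfolding tris_def by auto
  then have "f \<noteq> {}" by auto
  then obtain v where v: "v \<in> f" by blast
  have vK: "v \<in> verts K" using t0 v unfolding verts_def by auto
  let ?L = "vlink K v"
  have cs: "closed_surface ?L" using M vK unfolding closed_3manifold_def sphere2_def by blast
  have finf: "finite f" using t0 by (auto intro: card_ge_0_finite)
  have ce: "card (f - {v}) = 2" using t0 v finf by simp
  have "t0 - {v} \<in> ?L" using t0 v unfolding vlink_def by blast
  then have e2: "f - {v} \<in> edges2 ?L" using ce t0 unfolding edges2_def by blast
  then have c2: "card {g \<in> ?L. f - {v} \<subseteq> g} = 2" using cs unfolding closed_surface_def by blast
  have inj: "inj_on (\<lambda>t. t - {v}) {t \<in> K. f \<subseteq> t}"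
    by (rule inj_onI) (use v in auto)
  have img: "(\<lambda>t. t - {v}) ` {t \<in> K. f \<subseteq> t} = {g \<in> ?L. f - {v} \<subseteq> g}"
  proof
    show "(\<lambda>t. t - {v}) ` {t \<in> K. f \<subseteq> t} \<subseteq> {g \<in> ?L. f - {v} \<subseteq> g}"
      using v unfolding vlink_def by blast
    show "{g \<in> ?L. f - {v} \<subseteq> g} \<subseteq> (\<lambda>t. t - {v}) ` {t \<in> K. f \<subseteq> t}"
    proof
      fix g assume "g \<in> {g \<in> ?L. f - {v} \<subseteq> g}"
      then obtain t where "t \<in> K" "v \<in> t" "g = t - {v}" "f - {v} \<subseteq> g" unfolding vlink_def by blast
      then show "g \<in> (\<lambda>t. t - {v}) ` {t \<in> K. f \<subseteq> t}" by blast
    qed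
  qed
  show ?thesis using card_image[OF inj] img c2 by simp
qed

lemma bit_of_nat0: "(of_nat n = (0::bit)) \<longleftrightarrow> even n"
  by (induction n) auto

lemma M_stokes: assumes M: "closed_3manifold K"
  shows "(\<Sum>t\<in>K. \<Sum>f\<in>{f\<in>tris K. f \<subseteq> t}. X f) = (0::bit)"
proof -
  have "(\<Sum>t\<in>K. \<Sum>f\<in>{f\<in>tris K. f \<subseteq> t}. X f) = (\<Sum>f\<in>tris K. of_nat (card {t\<in>K. f \<subseteq> t}) * X f)"
    by (rule sum_swap_count[OF fin_K[OF M] fin_tris[OF M]])
  also have "\<dots> = 0" using tri_two_tets[OF M] by simp
  finally show ?thesis .
qed

lemma A_stokes: assumes M: "closed_3manifold K" and A: "cycle2 K A"
  shows "(\<Sum>f\<in>A. \<Sum>e\<in>{e\<in>edges K. e \<subseteq> f}. Y e) = (0::bit)"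
proof -
  have fA: "finite A" using A fin_tris[OF M] unfolding cycle2_def by (auto intro: finite_subset)
  have "(\<Sum>f\<in>A. \<Sum>e\<in>{e\<in>edges K. e \<subseteq> f}. Y e) = (\<Sum>e\<in>edges K. of_nat (card {f\<in>A. e \<subseteq> f}) * Y e)"
    by (rule sum_swap_count[OF fA fin_edges[OF M]])
  also have "\<dots> = 0" using A unfolding cycle2_def by (simp add: bit_of_nat0)
  finally show ?thesis .
qed

lemma bit_sum0: "(p::bit) + q + r = 0 \<Longrightarrow> q = p + r"
  by (cases p; cases q; cases r) simp_all

lemma cocyc_tri: assumes "cocycle1 K a" "{x,y,z} \<in> tris K" "distinct [x,y,z]"
  shows "(of_nat (a {x,z}) :: bit) = of_nat (a {x,y}) + of_nat (a {y,z})"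
proof -
  have "even (a {x,y} + a {x,z} + a {y,z})"
    using assms tri_edges_sum[OF assms(3), of a] unfolding cocycle1_def by metis
  then have "(of_nat (a {x,y} + a {x,z} + a {y,z}) :: bit) = 0" by (simp add: bit_of_nat0)
  then show ?thesis by (intro bit_sum0) simp
qed

lemma olist_sub: assumes "branching K br" "t \<in> K" "set xs \<subseteq> t" "sorted_wrt br xs"
  shows "olist br (set xs) = xs"
  using olist_eq[OF sto_subset[OF branching_sto[OF assms(1,2)] assms(3)] refl assms(4)] .

lemma olist3: assumes "branching K br" "t \<in> K" "{x,y,z} \<subseteq> t" "br x y" "br x z" "br y z"
  shows "olist br {x,y,z} = [x,y,z]"
  using olist_sub[OF assms(1,2), of "[x,y,z]"] assms by simp

lemma olist2: assumes "branching K br" "t \<in> K" "{x,y} \<subseteq> t" "br x y"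
  shows "olist br {x,y} = [x,y]"
  using olist_sub[OF assms(1,2), of "[x,y]"] assms by simp


definition c2 :: "('v \<Rightarrow> 'v \<Rightarrow> bool) \<Rightarrow> ('v set \<Rightarrow> nat) \<Rightarrow> ('v set \<Rightarrow> nat) \<Rightarrow> 'v set \<Rightarrow> nat" where
  "c2 br a b f = (let xs = olist br f in a {xs!0, xs!1} * b {xs!1, xs!2})"

lemma tet_sum: assumes M: "closed_3manifold K" and Br: "branching K br" and t: "t \<in> K"
  and olt: "olist br t = [x0,x1,x2,x3]" and te: "t = {x0,x1,x2,x3}" and d: "distinct [x0,x1,x2,x3]"
  and s: "sorted_wrt br [x0,x1,x2,x3]"
  shows "(\<Sum>f\<in>{f\<in>tris K. f \<subseteq> t}. g f) = g {x1,x2,x3} + g {x0,x2,x3} + g {x0,x1,x3} + g {x0,x1,x2}"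
proof -
  have "{f\<in>tris K. f \<subseteq> t} = {f. f \<subseteq> {x0,x1,x2,x3} \<and> card f = 3}" using tris_in_tet[OF t] te by simp
  then show ?thesis by (simp only: tet_faces_sum[OF d])
qed

lemma S3_bit: "(a02::bit) = a01 + a12 \<Longrightarrow> b13 = b12 + b23 \<Longrightarrow> a12*b23 + a02*b23 + a01*b13 + a01*b12 = 0"
  by (cases a01; cases a12; cases b12; cases b23) simp_all

lemma S3_tet: assumes M: "closed_3manifold K" and Br: "branching K br" and t: "t \<in> K"
  and a: "cocycle1 K a" and b: "cocycle1 K b"
  shows "(\<Sum>f\<in>{f\<in>tris K. f \<subseteq> t}. (of_nat (c2 br a b f) :: bit)) = 0"
proof -
  obtain x0 x1 x2 x3 where o: "olist br t = [x0,x1,x2,x3]" and te: "t = {x0,x1,x2,x3}" and d: "distinct [x0,x1,x2,x3]"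
    and s: "sorted_wrt br [x0,x1,x2,x3]" using tet_list[OF M Br t] by blast
  have o123: "olist br {x1,x2,x3} = [x1,x2,x3]" using olist3[OF Br t] te s by simp
  have o023: "olist br {x0,x2,x3} = [x0,x2,x3]" using olist3[OF Br t] te s by simp
  have o013: "olist br {x0,x1,x3} = [x0,x1,x3]" using olist3[OF Br t] te s by simp
  have o012: "olist br {x0,x1,x2} = [x0,x1,x2]" using olist3[OF Br t] te s by simp
  have ca: "(of_nat (a {x0,x2}) :: bit) = of_nat (a {x0,x1}) + of_nat (a {x1,x2})"
    using cocyc_tri[OF a tri_mem[OF t]] te d by simp
  have cb: "(of_nat (b {x1,x3}) :: bit) = of_nat (b {x1,x2}) + of_nat (b {x2,x3})"
    using cocyc_tri[OF b tri_mem[OF t]] te d by simp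
  have e1: "c2 br a b {x1,x2,x3} = a {x1,x2} * b {x2,x3}" unfolding c2_def o123 by simp
  have e2: "c2 br a b {x0,x2,x3} = a {x0,x2} * b {x2,x3}" unfolding c2_def o023 by simp
  have e3: "c2 br a b {x0,x1,x3} = a {x0,x1} * b {x1,x3}" unfolding c2_def o013 by simp
  have e4: "c2 br a b {x0,x1,x2} = a {x0,x1} * b {x1,x2}" unfolding c2_def o012 by simp
  show ?thesis
    unfolding tet_sum[OF M Br t o te d s] e1 e2 e3 e4 of_nat_mult
    by (rule S3_bit[OF ca cb])
qed

lemma even3_bit: "even (p + q + r) \<Longrightarrow> (of_nat q :: bit) = of_nat p + of_nat r"
proof -
  assume "even (p + q + r)"
  then have "(of_nat (p + q + r) :: bit) = 0" by (simp only: bit_of_nat0)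
  then show ?thesis by (intro bit_sum0) simp
qed

lemma PD_lemma: assumes M: "closed_3manifold K" and Br: "branching K br" and A: "cycle2 K A"
  and pd: "poincare_dual K br A al" and a: "cocycle1 K a" and b: "cocycle1 K b"
  shows "(of_nat (\<Sum>f\<in>A. c2 br a b f) :: bit) = of_nat (\<Sum>t\<in>K. cup3 br al a b t)"
proof -
  let ?T = "tris K"
  define g where "g f = (of_nat (c2 br a b f) :: bit)" for f
  obtain C where C: "C \<subseteq> K" and Cf: "\<forall>f\<in>?T. even (capM K br al f + (if f \<in> A then 1 else 0) + card {t\<in>C. f \<subseteq> t})"
    using pd unfolding poincare_dual_def by blast
  have AT: "A \<subseteq> ?T" using A unfolding cycle2_def by blast
  have fT: "finite ?T" using fin_tris[OF M] .
  have fK: "finite K" using fin_K[OF M] .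
  have fC: "finite C" using C fK finite_subset by blast
  have s1: "(of_nat (\<Sum>f\<in>A. c2 br a b f) :: bit) = (\<Sum>f\<in>?T. (if f \<in> A then g f else 0))"
  proof -
    have "(\<Sum>f\<in>?T. (if f \<in> A then g f else 0)) = (\<Sum>f\<in>?T \<inter> A. g f)"
      using sum.inter_restrict[OF fT, of g A] by simp
    also have "?T \<inter> A = A" using AT by blast
    finally show ?thesis unfolding g_def by simp
  qed
  have s2: "(if f \<in> A then g f else 0) = of_nat (capM K br al f) * g f + of_nat (card {t\<in>C. f \<subseteq> t}) * g f"
    if "f \<in> ?T" for f
  proof -
    have "(of_nat (if f \<in> A then 1 else 0) :: bit) = of_nat (capM K br al f) + of_nat (card {t\<in>C. f \<subseteq> t})"
      using even3_bit Cf that by blast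
    then have "(of_nat (if f \<in> A then 1 else 0) :: bit) * g f = of_nat (capM K br al f) * g f + of_nat (card {t\<in>C. f \<subseteq> t}) * g f"
      by (simp only: distrib_right)
    moreover have "(if f \<in> A then g f else 0) = (of_nat (if f \<in> A then 1 else 0) :: bit) * g f"
      by (cases "f \<in> A") (simp_all only: if_True if_False of_nat_1 of_nat_0 mult_1 mult_zero_left)
    ultimately show ?thesis by (simp only:)
  qed
  have s3: "(\<Sum>f\<in>?T. of_nat (card {t\<in>C. f \<subseteq> t}) * g f) = 0"
  proof -
    have "(\<Sum>f\<in>?T. of_nat (card {t\<in>C. f \<subseteq> t}) * g f) = (\<Sum>t\<in>C. \<Sum>f\<in>{f\<in>?T. f \<subseteq> t}. g f)"
      by (rule sum_swap_count[OF fC fT, symmetric])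
    also have "\<dots> = (\<Sum>t\<in>C. 0)"
      by (rule sum.cong[OF refl]) (use S3_tet[OF M Br _ a b] C in \<open>auto simp: g_def\<close>)
    finally show ?thesis by simp
  qed
  define F where "F t = (let xs = olist br t in {xs!1, xs!2, xs!3})" for t
  define G where "G t = (let xs = olist br t in al {xs!0, xs!1})" for t
  have capM_eq: "capM K br al f = sum G {t\<in>K. F t = f}" for f
    unfolding capM_def F_def G_def Let_def
    by (rule sum.cong[OF Collect_cong refl]) blast
  have FK: "F ` K \<subseteq> ?T"
  proof
    fix f assume "f \<in> F ` K"
    then obtain t where t: "t \<in> K" "f = F t" by (metis imageE)
    have True by simp
    obtain x0 x1 x2 x3 where o: "olist br t = [x0,x1,x2,x3]" and te: "t = {x0,x1,x2,x3}" and d: "distinct [x0,x1,x2,x3]"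
      by (rule tet_list[OF M Br t(1)])
    have True by simp
    have "F t = {x1,x2,x3}" unfolding F_def o by simp
    then show "f \<in> ?T" using tri_mem[OF t(1)] t te d by simp
  qed
  have pt: "of_nat (G t) * g (F t) = (of_nat (cup3 br al a b t) :: bit)" if t: "t \<in> K" for t
  proof -
    obtain x0 x1 x2 x3 where o: "olist br t = [x0,x1,x2,x3]" and te: "t = {x0,x1,x2,x3}" and d: "distinct [x0,x1,x2,x3]"
      and s: "sorted_wrt br [x0,x1,x2,x3]" using tet_list[OF M Br t] by blast
    have o123: "olist br {x1,x2,x3} = [x1,x2,x3]" using olist3[OF Br t] te s by simp
    have "F t = {x1,x2,x3}" unfolding F_def o by simp
    moreover have "G t = al {x0,x1}" unfolding G_def o by simp
    moreover have "c2 br a b {x1,x2,x3} = a {x1,x2} * b {x2,x3}" unfolding c2_def o123 by simp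
    moreover have "cup3 br al a b t = al {x0,x1} * a {x1,x2} * b {x2,x3}" unfolding cup3_def o by simp
    ultimately show ?thesis unfolding g_def by (simp add: mult.assoc)
  qed
  have s4: "(\<Sum>f\<in>?T. of_nat (capM K br al f) * g f) = (of_nat (\<Sum>t\<in>K. cup3 br al a b t) :: bit)"
  proof -
    have "(\<Sum>f\<in>?T. of_nat (capM K br al f) * g f) = (\<Sum>f\<in>?T. \<Sum>t\<in>{t\<in>K. F t = f}. of_nat (G t) * g (F t))"
    proof (rule sum.cong[OF refl])
      fix f assume "f \<in> ?T"
      have "(of_nat (capM K br al f) :: bit) * g f = (\<Sum>t\<in>{t\<in>K. F t = f}. of_nat (G t) * g f)"
        unfolding capM_eq by (simp only: of_nat_sum sum_distrib_right)
      also have "\<dots> = (\<Sum>t\<in>{t\<in>K. F t = f}. of_nat (G t) * g (F t))"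
        by (rule sum.cong) auto
      finally show "(of_nat (capM K br al f) :: bit) * g f = (\<Sum>t\<in>{t\<in>K. F t = f}. of_nat (G t) * g (F t))" .
    qed
    also have "\<dots> = (\<Sum>t\<in>K. of_nat (G t) * g (F t))"
      by (rule sum.group[OF fK fT FK])
    also have "\<dots> = (\<Sum>t\<in>K. of_nat (cup3 br al a b t))"
      by (rule sum.cong[OF refl]) (rule pt)
    finally show ?thesis by simp
  qed
  have "(of_nat (\<Sum>f\<in>A. c2 br a b f) :: bit) = (\<Sum>f\<in>?T. of_nat (capM K br al f) * g f + of_nat (card {t\<in>C. f \<subseteq> t}) * g f)"
    unfolding s1 by (rule sum.cong[OF refl]) (rule s2)
  also have "\<dots> = (\<Sum>f\<in>?T. of_nat (capM K br al f) * g f) + (\<Sum>f\<in>?T. of_nat (card {t\<in>C. f \<subseteq> t}) * g f)"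
    by (rule sum.distrib)
  finally show ?thesis using s3 s4 by simp
qed

lemma G32_bit: "(a02::bit) = a01 + a12 \<Longrightarrow> b13 = b12 + b23 \<Longrightarrow>
  a01 * (c12 + (l1 + l2)) * b23 = a01 * c12 * b23 + (a12 * l2 * b23 + a02 * l2 * b23 + a01 * l1 * b13 + a01 * l1 * b12)"
  by (cases a01; cases a12; cases c12; cases l1; cases l2; cases b12; cases b23) simp_all

lemma G33_bit: "(a02::bit) = a01 + a12 \<Longrightarrow> c13 = c12 + c23 \<Longrightarrow>
  a01 * c12 * (b23 + (l2 + l3)) = a01 * c12 * b23 + (a12 * c23 * l3 + a02 * c23 * l3 + a01 * c13 * l3 + a01 * c12 * l2)"
  by (cases a01; cases a12; cases c12; cases c23; cases l2; cases l3; cases b23) simp_all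

lemma G21_bit: "(b02::bit) = b01 + b12 \<Longrightarrow>
  (a01 + (l0 + l1)) * b12 = a01 * b12 + (l0 * b01 + l0 * b02 + l1 * b12)"
  by (cases a01; cases l0; cases l1; cases b01; cases b12) simp_all

lemma G22_bit: "(a02::bit) = a01 + a12 \<Longrightarrow>
  a01 * (b12 + (l1 + l2)) = a01 * b12 + (a01 * l1 + a02 * l2 + a12 * l2)"
  by (cases a01; cases a12; cases l1; cases l2; cases b12) simp_all

lemma sum_sum_zero_bit:
  assumes "\<And>x. x \<in> S \<Longrightarrow> (P x :: bit) = Q x + R x" "(\<Sum>x\<in>S. R x) = 0"
  shows "(\<Sum>x\<in>S. P x) = (\<Sum>x\<in>S. Q x)"
proof -
  have "(\<Sum>x\<in>S. P x) = (\<Sum>x\<in>S. Q x + R x)" using assms(1) by (rule sum.cong[OF refl])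
  also have "\<dots> = (\<Sum>x\<in>S. Q x) + (\<Sum>x\<in>S. R x)" by (rule sum.distrib)
  finally show ?thesis using assms(2) by simp
qed

lemma gauge3_slot2: assumes M: "closed_3manifold K" and Br: "branching K br"
  and al: "cocycle1 K al" and b: "cocycle1 K b"
  and H: "\<forall>e\<in>edges K. (of_nat (a' e) :: bit) = of_nat (a e) + sum l e"
  shows "(of_nat (\<Sum>t\<in>K. cup3 br al a' b t) :: bit) = of_nat (\<Sum>t\<in>K. cup3 br al a b t)"
proof -
  define X where "X f = (let ys = olist br f in (of_nat (al {ys!0, ys!1}) :: bit) * l (ys!1) * of_nat (b {ys!1, ys!2}))" for f
  have pt: "(of_nat (cup3 br al a' b t) :: bit) = of_nat (cup3 br al a b t) + (\<Sum>f\<in>{f\<in>tris K. f \<subseteq> t}. X f)"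
    if t: "t \<in> K" for t
  proof -
    obtain x0 x1 x2 x3 where o: "olist br t = [x0,x1,x2,x3]" and te: "t = {x0,x1,x2,x3}" and d: "distinct [x0,x1,x2,x3]"
      and s: "sorted_wrt br [x0,x1,x2,x3]" by (rule tet_list[OF M Br t])
    have o123: "olist br {x1,x2,x3} = [x1,x2,x3]" using olist3[OF Br t] te s by simp
    have o023: "olist br {x0,x2,x3} = [x0,x2,x3]" using olist3[OF Br t] te s by simp
    have o013: "olist br {x0,x1,x3} = [x0,x1,x3]" using olist3[OF Br t] te s by simp
    have o012: "olist br {x0,x1,x2} = [x0,x1,x2]" using olist3[OF Br t] te s by simp
    have ca: "(of_nat (al {x0,x2}) :: bit) = of_nat (al {x0,x1}) + of_nat (al {x1,x2})"
      using cocyc_tri[OF al tri_mem[OF t]] te d by simp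
    have cb: "(of_nat (b {x1,x3}) :: bit) = of_nat (b {x1,x2}) + of_nat (b {x2,x3})"
      using cocyc_tri[OF b tri_mem[OF t]] te d by simp
    have e12: "{x1,x2} \<in> edges K" using edge_mem[OF t] te d by simp
    have h: "(of_nat (a' {x1,x2}) :: bit) = of_nat (a {x1,x2}) + (l x1 + l x2)"
      using H e12 d by simp
    have X1: "X {x1,x2,x3} = of_nat (al {x1,x2}) * l x2 * of_nat (b {x2,x3})" unfolding X_def o123 by simp
    have X2: "X {x0,x2,x3} = of_nat (al {x0,x2}) * l x2 * of_nat (b {x2,x3})" unfolding X_def o023 by simp
    have X3: "X {x0,x1,x3} = of_nat (al {x0,x1}) * l x1 * of_nat (b {x1,x3})" unfolding X_def o013 by simp
    have X4: "X {x0,x1,x2} = of_nat (al {x0,x1}) * l x1 * of_nat (b {x1,x2})" unfolding X_def o012 by simp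
    have c1: "cup3 br al a' b t = al {x0,x1} * a' {x1,x2} * b {x2,x3}" unfolding cup3_def o by simp
    have c2: "cup3 br al a b t = al {x0,x1} * a {x1,x2} * b {x2,x3}" unfolding cup3_def o by simp
    show ?thesis
      unfolding tet_sum[OF M Br t o te d s] X1 X2 X3 X4 c1 c2 of_nat_mult h
      by (rule G32_bit[OF ca cb])
  qed
  have "(of_nat (\<Sum>t\<in>K. cup3 br al a' b t) :: bit) = (\<Sum>t\<in>K. of_nat (cup3 br al a' b t))" by simp
  also have "\<dots> = (\<Sum>t\<in>K. of_nat (cup3 br al a b t))"
    by (rule sum_sum_zero_bit[OF pt M_stokes[OF M]])
  finally show ?thesis by simp
qed

lemma gauge3_slot3: assumes M: "closed_3manifold K" and Br: "branching K br"
  and al: "cocycle1 K al" and a: "cocycle1 K a"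
  and H: "\<forall>e\<in>edges K. (of_nat (b' e) :: bit) = of_nat (b e) + sum l e"
  shows "(of_nat (\<Sum>t\<in>K. cup3 br al a b' t) :: bit) = of_nat (\<Sum>t\<in>K. cup3 br al a b t)"
proof -
  define X where "X f = (let ys = olist br f in (of_nat (al {ys!0, ys!1}) :: bit) * of_nat (a {ys!1, ys!2}) * l (ys!2))" for f
  have pt: "(of_nat (cup3 br al a b' t) :: bit) = of_nat (cup3 br al a b t) + (\<Sum>f\<in>{f\<in>tris K. f \<subseteq> t}. X f)"
    if t: "t \<in> K" for t
  proof -
    obtain x0 x1 x2 x3 where o: "olist br t = [x0,x1,x2,x3]" and te: "t = {x0,x1,x2,x3}" and d: "distinct [x0,x1,x2,x3]"
      and s: "sorted_wrt br [x0,x1,x2,x3]" by (rule tet_list[OF M Br t])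
    have o123: "olist br {x1,x2,x3} = [x1,x2,x3]" using olist3[OF Br t] te s by simp
    have o023: "olist br {x0,x2,x3} = [x0,x2,x3]" using olist3[OF Br t] te s by simp
    have o013: "olist br {x0,x1,x3} = [x0,x1,x3]" using olist3[OF Br t] te s by simp
    have o012: "olist br {x0,x1,x2} = [x0,x1,x2]" using olist3[OF Br t] te s by simp
    have ca: "(of_nat (al {x0,x2}) :: bit) = of_nat (al {x0,x1}) + of_nat (al {x1,x2})"
      using cocyc_tri[OF al tri_mem[OF t]] te d by simp
    have cb: "(of_nat (a {x1,x3}) :: bit) = of_nat (a {x1,x2}) + of_nat (a {x2,x3})"
      using cocyc_tri[OF a tri_mem[OF t]] te d by simp
    have e23: "{x2,x3} \<in> edges K" using edge_mem[OF t] te d by simp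
    have h: "(of_nat (b' {x2,x3}) :: bit) = of_nat (b {x2,x3}) + (l x2 + l x3)"
      using H e23 d by simp
    have X1: "X {x1,x2,x3} = of_nat (al {x1,x2}) * of_nat (a {x2,x3}) * l x3" unfolding X_def o123 by simp
    have X2: "X {x0,x2,x3} = of_nat (al {x0,x2}) * of_nat (a {x2,x3}) * l x3" unfolding X_def o023 by simp
    have X3: "X {x0,x1,x3} = of_nat (al {x0,x1}) * of_nat (a {x1,x3}) * l x3" unfolding X_def o013 by simp
    have X4: "X {x0,x1,x2} = of_nat (al {x0,x1}) * of_nat (a {x1,x2}) * l x2" unfolding X_def o012 by simp
    have c1: "cup3 br al a b' t = al {x0,x1} * a {x1,x2} * b' {x2,x3}" unfolding cup3_def o by simp
    have c2: "cup3 br al a b t = al {x0,x1} * a {x1,x2} * b {x2,x3}" unfolding cup3_def o by simp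
    show ?thesis
      unfolding tet_sum[OF M Br t o te d s] X1 X2 X3 X4 c1 c2 of_nat_mult h
      by (rule G33_bit[OF ca cb])
  qed
  have "(of_nat (\<Sum>t\<in>K. cup3 br al a b' t) :: bit) = (\<Sum>t\<in>K. of_nat (cup3 br al a b' t))" by simp
  also have "\<dots> = (\<Sum>t\<in>K. of_nat (cup3 br al a b t))"
    by (rule sum_sum_zero_bit[OF pt M_stokes[OF M]])
  finally show ?thesis by simp
qed

lemma tri_edge_sum: assumes Br: "branching K br" and f: "f \<in> tris K"
  and o: "olist br f = [y0,y1,y2]" and fe: "f = {y0,y1,y2}" and d: "distinct [y0,y1,y2]"
  shows "(\<Sum>e\<in>{e\<in>edges K. e \<subseteq> f}. g e) = g {y0,y1} + g {y0,y2} + g {y1,y2}"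
proof -
  have "{e\<in>edges K. e \<subseteq> f} = {e. e \<subseteq> {y0,y1,y2} \<and> card e = 2}" using edges_in_tri[OF f] fe by simp
  then show ?thesis by (simp only: tri_edges_sum[OF d])
qed

lemma tri_data: assumes Br: "branching K br" and f: "f \<in> tris K"
  obtains y0 y1 y2 where "olist br f = [y0,y1,y2]" "f = {y0,y1,y2}" "distinct [y0,y1,y2]"
    "olist br {y0,y1} = [y0,y1]" "olist br {y0,y2} = [y0,y2]" "olist br {y1,y2} = [y1,y2]"
    "{y0,y1} \<in> edges K" "{y0,y2} \<in> edges K" "{y1,y2} \<in> edges K"
proof -
  obtain y0 y1 y2 where o: "olist br f = [y0,y1,y2]" and fe: "f = {y0,y1,y2}" and d: "distinct [y0,y1,y2]"
    and s: "sorted_wrt br [y0,y1,y2]" by (rule tri_list[OF Br f])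
  obtain t where t: "t \<in> K" "f \<subseteq> t" using f unfolding tris_def by blast
  have "olist br {y0,y1} = [y0,y1]" "olist br {y0,y2} = [y0,y2]" "olist br {y1,y2} = [y1,y2]"
    using olist2[OF Br t(1)] t(2) fe s by auto
  moreover have "{y0,y1} \<in> edges K" "{y0,y2} \<in> edges K" "{y1,y2} \<in> edges K"
    using edge_mem[OF t(1)] t(2) fe d by auto
  ultimately show ?thesis using that o fe d by blast
qed

lemma gauge2_slot1: assumes M: "closed_3manifold K" and Br: "branching K br" and A: "cycle2 K A"
  and b: "cocycle1 K b"
  and H: "\<forall>e\<in>edges K. (of_nat (a' e) :: bit) = of_nat (a e) + sum l e"
  shows "(of_nat (\<Sum>f\<in>A. c2 br a' b f) :: bit) = of_nat (\<Sum>f\<in>A. c2 br a b f)"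
proof -
  define Y where "Y e = (let xs = olist br e in l (xs!0) * (of_nat (b e) :: bit))" for e
  have pt: "(of_nat (c2 br a' b f) :: bit) = of_nat (c2 br a b f) + (\<Sum>e\<in>{e\<in>edges K. e \<subseteq> f}. Y e)"
    if fA: "f \<in> A" for f
  proof -
    have f: "f \<in> tris K" using fA A unfolding cycle2_def by blast
    obtain y0 y1 y2 where o: "olist br f = [y0,y1,y2]" and fe: "f = {y0,y1,y2}" and d: "distinct [y0,y1,y2]"
      and o01: "olist br {y0,y1} = [y0,y1]" and o02: "olist br {y0,y2} = [y0,y2]" and o12: "olist br {y1,y2} = [y1,y2]"
      and e01: "{y0,y1} \<in> edges K" by (rule tri_data[OF Br f])
    have cb: "(of_nat (b {y0,y2}) :: bit) = of_nat (b {y0,y1}) + of_nat (b {y1,y2})"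
      using cocyc_tri[OF b] f fe d by simp
    have h: "(of_nat (a' {y0,y1}) :: bit) = of_nat (a {y0,y1}) + (l y0 + l y1)"
      using H e01 d by simp
    have Y1: "Y {y0,y1} = l y0 * of_nat (b {y0,y1})" unfolding Y_def o01 by simp
    have Y2: "Y {y0,y2} = l y0 * of_nat (b {y0,y2})" unfolding Y_def o02 by simp
    have Y3: "Y {y1,y2} = l y1 * of_nat (b {y1,y2})" unfolding Y_def o12 by simp
    have c1: "c2 br a' b f = a' {y0,y1} * b {y1,y2}" unfolding c2_def o by simp
    have c2: "c2 br a b f = a {y0,y1} * b {y1,y2}" unfolding c2_def o by simp
    show ?thesis
      unfolding tri_edge_sum[OF Br f o fe d] Y1 Y2 Y3 c1 c2 of_nat_mult h
      by (rule G21_bit[OF cb])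
  qed
  have "(of_nat (\<Sum>f\<in>A. c2 br a' b f) :: bit) = (\<Sum>f\<in>A. of_nat (c2 br a' b f))" by simp
  also have "\<dots> = (\<Sum>f\<in>A. of_nat (c2 br a b f))"
    by (rule sum_sum_zero_bit[OF pt A_stokes[OF M A]])
  finally show ?thesis by simp
qed

lemma gauge2_slot2: assumes M: "closed_3manifold K" and Br: "branching K br" and A: "cycle2 K A"
  and a: "cocycle1 K a"
  and H: "\<forall>e\<in>edges K. (of_nat (b' e) :: bit) = of_nat (b e) + sum l e"
  shows "(of_nat (\<Sum>f\<in>A. c2 br a b' f) :: bit) = of_nat (\<Sum>f\<in>A. c2 br a b f)"
proof -
  define Y where "Y e = (let xs = olist br e in (of_nat (a e) :: bit) * l (xs!1))" for e
  have pt: "(of_nat (c2 br a b' f) :: bit) = of_nat (c2 br a b f) + (\<Sum>e\<in>{e\<in>edges K. e \<subseteq> f}. Y e)"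
    if fA: "f \<in> A" for f
  proof -
    have f: "f \<in> tris K" using fA A unfolding cycle2_def by blast
    obtain y0 y1 y2 where o: "olist br f = [y0,y1,y2]" and fe: "f = {y0,y1,y2}" and d: "distinct [y0,y1,y2]"
      and o01: "olist br {y0,y1} = [y0,y1]" and o02: "olist br {y0,y2} = [y0,y2]" and o12: "olist br {y1,y2} = [y1,y2]"
      and e12: "{y1,y2} \<in> edges K" by (rule tri_data[OF Br f])
    have ca: "(of_nat (a {y0,y2}) :: bit) = of_nat (a {y0,y1}) + of_nat (a {y1,y2})"
      using cocyc_tri[OF a] f fe d by simp
    have h: "(of_nat (b' {y1,y2}) :: bit) = of_nat (b {y1,y2}) + (l y1 + l y2)"
      using H e12 d by simp
    have Y1: "Y {y0,y1} = of_nat (a {y0,y1}) * l y1" unfolding Y_def o01 by simp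
    have Y2: "Y {y0,y2} = of_nat (a {y0,y2}) * l y2" unfolding Y_def o02 by simp
    have Y3: "Y {y1,y2} = of_nat (a {y1,y2}) * l y2" unfolding Y_def o12 by simp
    have c1: "c2 br a b' f = a {y0,y1} * b' {y1,y2}" unfolding c2_def o by simp
    have c2: "c2 br a b f = a {y0,y1} * b {y1,y2}" unfolding c2_def o by simp
    show ?thesis
      unfolding tri_edge_sum[OF Br f o fe d] Y1 Y2 Y3 c1 c2 of_nat_mult h
      by (rule G22_bit[OF ca])
  qed
  have "(of_nat (\<Sum>f\<in>A. c2 br a b' f) :: bit) = (\<Sum>f\<in>A. of_nat (c2 br a b' f))" by simp
  also have "\<dots> = (\<Sum>f\<in>A. of_nat (c2 br a b f))"
    by (rule sum_sum_zero_bit[OF pt A_stokes[OF M A]])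
  finally show ?thesis by simp
qed

lemma minus_one_pow_cong: assumes "(of_nat n :: bit) = of_nat m" shows "(-1::complex) ^ n = (-1) ^ m"
proof -
  have "(of_nat (n + m) :: bit) = of_nat n + of_nat m" by simp
  also have "\<dots> = 0" using assms by simp
  finally have "even (n + m)" by (simp only: bit_of_nat0)
  then have "even n \<longleftrightarrow> even m" by simp
  then show ?thesis by (cases "even n") (simp_all add: neg_one_even_power neg_one_odd_power)
qed

lemma bit_mod2: "(of_nat (n mod 2) :: bit) = of_nat n"
proof -
  have "(of_nat n :: bit) = of_nat (n mod 2 + 2 * (n div 2))" by simp
  also have "\<dots> = of_nat (n mod 2) + 2 * of_nat (n div 2)" by (simp only: of_nat_add of_nat_mult of_nat_numeral)
  also have "\<dots> = of_nat (n mod 2)" by simp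
  finally show ?thesis by simp
qed

lemma sum_indicator: "finite S \<Longrightarrow> (\<Sum>e\<in>S. (if P e then 1 else 0 :: nat)) = card {e\<in>S. P e}"
  by (simp add: sum.inter_filter[symmetric])

lemma code_cocycle: assumes psi: "\<psi> \<in> code_space K" and nz: "\<psi> z \<noteq> 0" and k: "k \<in> {1,2,3}"
  shows "cocycle1 K (acochain k z)"
  unfolding cocycle1_def
proof
  fix f assume f: "f \<in> tris K"
  have "Zstab K k f \<psi> = \<psi>" using psi k f unfolding code_space_def by blast
  then have "(-1) ^ card {e. e \<subseteq> f \<and> card e = 2 \<and> z k e} * \<psi> z = \<psi> z"
    unfolding Zstab_def by (metis (no_types, lifting))
  then have "(-1::complex) ^ card {e. e \<subseteq> f \<and> card e = 2 \<and> z k e} = 1" using nz by simp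
  then have ev: "even (card {e. e \<subseteq> f \<and> card e = 2 \<and> z k e})"
    by (metis neg_one_odd_power one_neq_neg_one)
  have ff: "finite f" using f unfolding tris_def by (auto intro: card_ge_0_finite)
  have fin: "finite {e. e \<subseteq> f \<and> card e = 2}"
    by (rule finite_subset[of _ "Pow f"]) (use ff in auto)
  have "(\<Sum>e\<in>{e. e \<subseteq> f \<and> card e = 2}. acochain k z e) = card {e \<in> {e. e \<subseteq> f \<and> card e = 2}. z k e}"
    unfolding acochain_def using sum_indicator[OF fin] by simp
  also have "{e \<in> {e. e \<subseteq> f \<and> card e = 2}. z k e} = {e. e \<subseteq> f \<and> card e = 2 \<and> z k e}" by blast
  finally show "even (\<Sum>e\<in>{e. e \<subseteq> f \<and> card e = 2}. acochain k z e)" using ev by simp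
qed

lemma Uprime_formula: "Uprime br A i j \<psi> z = (-1) ^ (\<Sum>f\<in>A. c2 br (acochain i z) (acochain j z) f) * \<psi> z"
proof -
  have "(let xs = olist br f in if z i {xs!0, xs!1} \<and> z j {xs!1, xs!2} then -1 else 1) =
        ((-1::complex) ^ c2 br (acochain i z) (acochain j z) f)" for f
    unfolding c2_def acochain_def Let_def by simp
  then show ?thesis unfolding Uprime_def by (simp add: power_sum)
qed

lemma cocycle_comb: assumes "\<forall>c\<in>B. cocycle1 K (beta c)"
  shows "cocycle1 K (\<lambda>e. \<Sum>c\<in>B. m c * beta c e)"
  unfolding cocycle1_def
proof
  fix f assume f: "f \<in> tris K"
  have "(\<Sum>e\<in>{e. e \<subseteq> f \<and> card e = 2}. \<Sum>c\<in>B. m c * beta c e) = (\<Sum>c\<in>B. m c * (\<Sum>e\<in>{e. e \<subseteq> f \<and> card e = 2}. beta c e))"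
    by (simp add: sum.swap[of _ _ B] sum_distrib_left)
  moreover have "even (\<Sum>c\<in>B. m c * (\<Sum>e\<in>{e. e \<subseteq> f \<and> card e = 2}. beta c e))"
    using assms f unfolding cocycle1_def by (intro dvd_sum) simp
  ultimately show "even (\<Sum>e\<in>{e. e \<subseteq> f \<and> card e = 2}. \<Sum>c\<in>B. m c * beta c e)" by simp
qed

lemma coh_bit: assumes "cohomologous1 K a a'"
  obtains l where "\<forall>e\<in>edges K. (of_nat (a' e) :: bit) = of_nat (a e) + sum l e"
proof -
  obtain lam :: "'a \<Rightarrow> nat" where h: "\<forall>e\<in>edges K. even (a e + a' e + (\<Sum>v\<in>e. lam v))"
    using assms unfolding cohomologous1_def by blast
  have "\<forall>e\<in>edges K. (of_nat (a' e) :: bit) = of_nat (a e) + sum (\<lambda>v. of_nat (lam v)) e"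
    using h even3_bit by (simp only: of_nat_sum[symmetric]) blast
  then show ?thesis using that by blast
qed

lemma trilinear: "(\<Sum>t\<in>K. cup3 br al (\<lambda>e. \<Sum>c\<in>B. m c * beta c e) (\<lambda>e. \<Sum>d\<in>B. m' d * beta d e) t)
   = (\<Sum>c\<in>B. \<Sum>d\<in>B. m c * m' d * (\<Sum>t\<in>K. cup3 br al (beta c) (beta d) t))"
proof -
  have "cup3 br al (\<lambda>e. \<Sum>c\<in>B. m c * beta c e) (\<lambda>e. \<Sum>d\<in>B. m' d * beta d e) t
     = (\<Sum>c\<in>B. \<Sum>d\<in>B. m c * m' d * cup3 br al (beta c) (beta d) t)" for t
    unfolding cup3_def Let_def by (simp add: sum_distrib_left sum_distrib_right mult_ac)
  then have "(\<Sum>t\<in>K. cup3 br al (\<lambda>e. \<Sum>c\<in>B. m c * beta c e) (\<lambda>e. \<Sum>d\<in>B. m' d * beta d e) t)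
     = (\<Sum>t\<in>K. \<Sum>c\<in>B. \<Sum>d\<in>B. m c * m' d * cup3 br al (beta c) (beta d) t)" by simp
  also have "\<dots> = (\<Sum>c\<in>B. \<Sum>t\<in>K. \<Sum>d\<in>B. m c * m' d * cup3 br al (beta c) (beta d) t)" by (rule sum.swap)
  also have "\<dots> = (\<Sum>c\<in>B. \<Sum>d\<in>B. \<Sum>t\<in>K. m c * m' d * cup3 br al (beta c) (beta d) t)"
    by (rule sum.cong[OF refl]) (rule sum.swap)
  also have "\<dots> = (\<Sum>c\<in>B. \<Sum>d\<in>B. m c * m' d * (\<Sum>t\<in>K. cup3 br al (beta c) (beta d) t))"
    by (simp add: sum_distrib_left)
  finally show ?thesis .
qed

definition flipz :: "'v set set \<Rightarrow> nat \<Rightarrow> 'v \<Rightarrow> 'v config \<Rightarrow> 'v config" where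
  "flipz K k v z = (\<lambda>k' e. if k' = k \<and> e \<in> edges K \<and> v \<in> e then \<not> z k' e else z k' e)"

lemma Xstab_flipz: "Xstab K k v \<psi> z = \<psi> (flipz K k v z)"
  unfolding Xstab_def flipz_def by simp

lemma flip_other: "k' \<noteq> k \<Longrightarrow> acochain k' (flipz K k v z) = acochain k' z"
  unfolding acochain_def flipz_def by auto

lemma flip_same: "\<forall>e\<in>edges K. (of_nat (acochain k (flipz K k v z) e) :: bit)
    = of_nat (acochain k z e) + sum (\<lambda>u. if u = v then 1 else 0) e"
proof
  fix e assume e: "e \<in> edges K"
  then have "card e = 2" unfolding edges_def by blast
  then obtain x y where xy: "e = {x,y}" "x \<noteq> y" by (meson card_2_iff)
  have s: "sum (\<lambda>u. if u = v then 1 else 0 :: bit) e = (if v \<in> e then 1 else 0)"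
    using xy by auto
  show "(of_nat (acochain k (flipz K k v z) e) :: bit) = of_nat (acochain k z e) + sum (\<lambda>u. if u = v then 1 else 0) e"
    unfolding s acochain_def flipz_def using e by (cases "z k e"; cases "v \<in> e") simp_all
qed

lemma phase_flip_inv:
  assumes M: "closed_3manifold K" and Br: "branching K br" and A: "cycle2 K A"
    and ci: "cocycle1 K (acochain i z)" and cj: "cocycle1 K (acochain j z)" and ij: "i \<noteq> j"
  shows "(of_nat (\<Sum>f\<in>A. c2 br (acochain i (flipz K k v z)) (acochain j (flipz K k v z)) f) :: bit)
       = of_nat (\<Sum>f\<in>A. c2 br (acochain i z) (acochain j z) f)"
proof (cases "k = i")
  case True
  then have "acochain j (flipz K k v z) = acochain j z" using flip_other ij by metis
  then show ?thesis using gauge2_slot1[OF M Br A cj flip_same[of K k v z]] True by simp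
next
  case False
  note ki = False
  show ?thesis
  proof (cases "k = j")
    case True
    then have "acochain i (flipz K k v z) = acochain i z" using flip_other ki by metis
    then show ?thesis using gauge2_slot2[OF M Br A ci flip_same[of K k v z]] True by simp
  next
    case False
    then show ?thesis using flip_other ki by metis
  qed
qed

theorem mainTheorem3:
  fixes K :: "'v set set" and br :: "'v \<Rightarrow> 'v \<Rightarrow> bool"
    and A :: "'v set set" and alpha1 :: "'v set \<Rightarrow> nat"
    and B :: "'b set" and beta :: "'b \<Rightarrow> 'v set \<Rightarrow> nat"
    and i j :: nat
  assumes "closed_3manifold K"
    and "branching K br"
    and "cycle2 K A"
    and "cohom_basis K B beta"
    and "poincare_dual K br A alpha1"
    and "i \<in> {1, 2, 3}" and "j \<in> {1, 2, 3}" and "i \<noteq> j"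
  shows "(\<forall>\<psi>\<in>code_space K. Uprime br A i j \<psi> \<in> code_space K) \<and>
         (\<forall>\<psi>\<in>code_space K. Uprime br A i j \<psi> =
            prod_logical_CZ K B beta i j
              (\<lambda>b c. (\<Sum>t\<in>K. cup3 br alpha1 (beta b) (beta c) t) mod 2) \<psi>)"
proof -
  note M = assms(1) and Br = assms(2) and A = assms(3) and CB = assms(4) and PD = assms(5)
  note ij = assms(8)
  have al: "cocycle1 K alpha1" using PD unfolding poincare_dual_def by blast
  have fB: "finite B" and bc: "\<forall>c\<in>B. cocycle1 K (beta c)"
    and uniq: "\<forall>a. cocycle1 K a \<longrightarrow> (\<exists>!m. (\<forall>b\<in>B. m b \<in> {0, 1}) \<and> (\<forall>b. b \<notin> B \<longrightarrow> m b = 0) \<and>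
              cohomologous1 K a (\<lambda>e. \<Sum>b\<in>B. m b * beta b e))"
    using CB unfolding cohom_basis_def by blast+
  define ph where "ph z = (-1::complex) ^ (\<Sum>f\<in>A. c2 br (acochain i z) (acochain j z) f)" for z
  have U: "Uprime br A i j \<psi> z = ph z * \<psi> z" for \<psi> z unfolding ph_def by (rule Uprime_formula)
  have part1: "Uprime br A i j \<psi> \<in> code_space K" if psi: "\<psi> \<in> code_space K" for \<psi>
  proof -
    have hil: "\<psi> \<in> hilbert K" using psi unfolding code_space_def by blast
    have "Uprime br A i j \<psi> \<in> hilbert K"
      using hil unfolding hilbert_def U by simp
    moreover have "Xstab K k v (Uprime br A i j \<psi>) = Uprime br A i j \<psi>"
      if k: "k \<in> {1,2,3}" and v: "v \<in> verts K" for k v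
    proof
      fix z
      have X: "Xstab K k v \<psi> = \<psi>" using psi k v unfolding code_space_def by blast
      have pz: "\<psi> (flipz K k v z) = \<psi> z" using X Xstab_flipz by metis
      show "Xstab K k v (Uprime br A i j \<psi>) z = Uprime br A i j \<psi> z"
      proof (cases "\<psi> z = 0")
        case True
        then show ?thesis unfolding Xstab_flipz U pz by simp
      next
        case False
        have ci: "cocycle1 K (acochain i z)" using code_cocycle[OF psi False assms(6)] .
        have cj: "cocycle1 K (acochain j z)" using code_cocycle[OF psi False assms(7)] .
        have "ph (flipz K k v z) = ph z"
          unfolding ph_def by (rule minus_one_pow_cong) (rule phase_flip_inv[OF M Br A ci cj ij])
        then show ?thesis unfolding Xstab_flipz U pz by simp
      qed
    qed
    moreover have "Zstab K k f (Uprime br A i j \<psi>) = Uprime br A i j \<psi>"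
      if k: "k \<in> {1,2,3}" and f: "f \<in> tris K" for k f
    proof
      fix z
      have Z: "Zstab K k f \<psi> = \<psi>" using psi k f unfolding code_space_def by blast
      then have "Zstab K k f \<psi> z = \<psi> z" by simp
      then have "(-1) ^ card {e. e \<subseteq> f \<and> card e = 2 \<and> z k e} * \<psi> z = \<psi> z" unfolding Zstab_def .
      then show "Zstab K k f (Uprime br A i j \<psi>) z = Uprime br A i j \<psi> z"
        unfolding Zstab_def U by (metis mult.left_commute)
    qed
    ultimately show ?thesis unfolding code_space_def by blast
  qed
  have part2: "Uprime br A i j \<psi> = prod_logical_CZ K B beta i j
              (\<lambda>b c. (\<Sum>t\<in>K. cup3 br alpha1 (beta b) (beta c) t) mod 2) \<psi>" if psi: "\<psi> \<in> code_space K" for \<psi>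
  proof
    fix z :: "'v config"
    define a where "a = acochain i z"
    define b where "b = acochain j z"
    define m where "m = coeff K B beta a"
    define m' where "m' = coeff K B beta b"
    define S where "S c d = (\<Sum>t\<in>K. cup3 br alpha1 (beta c) (beta d) t)" for c d
    define N where "N = (\<Sum>c\<in>B. \<Sum>d\<in>B. m c * m' d * (S c d mod 2))"
    have R: "prod_logical_CZ K B beta i j (\<lambda>b c. (\<Sum>t\<in>K. cup3 br alpha1 (beta b) (beta c) t) mod 2) \<psi> z
        = (-1) ^ N * \<psi> z"
    proof -
      have "(\<Prod>c\<in>B. \<Prod>d\<in>B. (lcz_phase K B beta c i d j z) ^ (S c d mod 2)) = (\<Prod>c\<in>B. \<Prod>d\<in>B. (-1::complex) ^ (m c * m' d * (S c d mod 2)))"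
        unfolding lcz_phase_def m_def m'_def a_def b_def by (simp add: power_mult)
      also have "\<dots> = (-1) ^ N" unfolding N_def by (simp add: power_sum)
      finally show ?thesis unfolding prod_logical_CZ_def diag_op_def S_def by simp
    qed
    show "Uprime br A i j \<psi> z = prod_logical_CZ K B beta i j (\<lambda>b c. (\<Sum>t\<in>K. cup3 br alpha1 (beta b) (beta c) t) mod 2) \<psi> z"
    proof (cases "\<psi> z = 0")
      case True
      then show ?thesis unfolding R U by simp
    next
      case False
      have ca: "cocycle1 K a" unfolding a_def using code_cocycle[OF psi False assms(6)] .
      have cb: "cocycle1 K b" unfolding b_def using code_cocycle[OF psi False assms(7)] .
      have Pm: "cohomologous1 K a (\<lambda>e. \<Sum>c\<in>B. m c * beta c e)"
        using theI'[OF uniq[rule_format, OF ca]] unfolding m_def coeff_def by blast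
      have Pm': "cohomologous1 K b (\<lambda>e. \<Sum>c\<in>B. m' c * beta c e)"
        using theI'[OF uniq[rule_format, OF cb]] unfolding m'_def coeff_def by blast
      define a' where "a' = (\<lambda>e. \<Sum>c\<in>B. m c * beta c e)"
      define b' where "b' = (\<lambda>e. \<Sum>c\<in>B. m' c * beta c e)"
      obtain l where hl: "\<forall>e\<in>edges K. (of_nat (a' e) :: bit) = of_nat (a e) + sum l e"
        using coh_bit[OF Pm] unfolding a'_def by blast
      obtain l' where hl': "\<forall>e\<in>edges K. (of_nat (b' e) :: bit) = of_nat (b e) + sum l' e"
        using coh_bit[OF Pm'] unfolding b'_def by blast
      have ca': "cocycle1 K a'" unfolding a'_def by (rule cocycle_comb[OF bc])
      have "(of_nat (\<Sum>f\<in>A. c2 br a b f) :: bit) = of_nat (\<Sum>t\<in>K. cup3 br alpha1 a b t)"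
        by (rule PD_lemma[OF M Br A PD ca cb])
      also have "\<dots> = of_nat (\<Sum>t\<in>K. cup3 br alpha1 a' b t)"
        by (rule gauge3_slot2[OF M Br al cb hl, symmetric])
      also have "\<dots> = of_nat (\<Sum>t\<in>K. cup3 br alpha1 a' b' t)"
        by (rule gauge3_slot3[OF M Br al ca' hl', symmetric])
      also have "(\<Sum>t\<in>K. cup3 br alpha1 a' b' t) = (\<Sum>c\<in>B. \<Sum>d\<in>B. m c * m' d * S c d)"
        unfolding a'_def b'_def S_def by (rule trilinear)
      also have "(of_nat (\<Sum>c\<in>B. \<Sum>d\<in>B. m c * m' d * S c d) :: bit) = of_nat N"
        unfolding N_def by (simp only: of_nat_sum of_nat_mult bit_mod2)
      finally have "ph z = (-1) ^ N" unfolding ph_def a_def b_def by (rule minus_one_pow_cong)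
      then show ?thesis unfolding R U by simp
    qed
  qed
  show ?thesis using part1 part2 by blast
qed

end
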